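(* Let $X_1,X_2$ be weakly regular random variables, and for $i=1,2$ let $f_i$ be the density of $X_i$, $G_i(t)=\mathbb{P}[X_i\ge t]$, $H_i(t)=\int_0^tG_i(u)\,\mathrm{d}u$, $r_i=\sup_{p\ge0}p\,\mathbb{P}[X_i\ge p]$, and $K_1(t)=f_2(t)(H_1(t)-r_1)-G_1(t)G_2(t)$, $K_2(t)=f_1(t)(H_2(t)-r_2)-G_1(t)G_2(t)$. Then for $i=1,2$ and all $u\ge0$: if $K_i(u)>0$ then $K_i(v)\ge0$ for all $v>u$.
   Context: A random variable $X\ge0$ is weakly regular if its support is an interval $[\alpha,\beta]$ with $0\le\alpha<\beta\le\infty$ (meaning $[\alpha,\infty)$ if $\beta=\infty$), on which it has a positive continuous density $f$ (and density $0$ outside), such that the virtual valuation $t-G(t)/f(t)$ is nondecreasing on the support, where $G(t)=\mathbb{P}[X\ge t]$. *)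

theory Defs
  imports "HOL-Probability.Probability"
begin

definition surv :: "'a measure \<Rightarrow> ('a \<Rightarrow> real) \<Rightarrow> real \<Rightarrow> real" where
  "surv M X t = measure M {\<omega> \<in> space M. X \<omega> \<ge> t}"

definition Hfun :: "'a measure \<Rightarrow> ('a \<Rightarrow> real) \<Rightarrow> real \<Rightarrow> real" where
  "Hfun M X t = integral {0..t} (surv M X)"

definition rev_opt :: "'a measure \<Rightarrow> ('a \<Rightarrow> real) \<Rightarrow> real" where
  "rev_opt M X = (SUP p\<in>{0..}. p * surv M X p)"

definition weakly_regular :: "'a measure \<Rightarrow> ('a \<Rightarrow> real) \<Rightarrow> (real \<Rightarrow> real) \<Rightarrow> bool" where
  "weakly_regular M X f \<longleftrightarrow>
     prob_space M \<and>
     (AE \<omega> in M. X \<omega> \<ge> 0) \<and>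
     distributed M lborel X (\<lambda>x. ennreal (f x)) \<and>
     (\<exists>(\<alpha>::real) (\<beta>::ereal).
        0 \<le> \<alpha> \<and> ereal \<alpha> < \<beta> \<and>
        (let S = {t. \<alpha> \<le> t \<and> ereal t \<le> \<beta>} in
           (\<forall>t\<in>S. f t > 0) \<and> (\<forall>t. t \<notin> S \<longrightarrow> f t = 0) \<and>
           continuous_on S f \<and>
           mono_on S (\<lambda>t. t - surv M X t / f t)))"

definition K1 :: "'a measure \<Rightarrow> ('a \<Rightarrow> real) \<Rightarrow> 'b measure \<Rightarrow> ('b \<Rightarrow> real) \<Rightarrow> (real \<Rightarrow> real) \<Rightarrow> real \<Rightarrow> real" where
  "K1 M1 X1 M2 X2 f2 t = f2 t * (Hfun M1 X1 t - rev_opt M1 X1) - surv M1 X1 t * surv M2 X2 t"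

definition K2 :: "'a measure \<Rightarrow> ('a \<Rightarrow> real) \<Rightarrow> 'b measure \<Rightarrow> ('b \<Rightarrow> real) \<Rightarrow> (real \<Rightarrow> real) \<Rightarrow> real \<Rightarrow> real" where
  "K2 M1 X1 M2 X2 f1 t = f1 t * (Hfun M2 X2 t - rev_opt M2 X2) - surv M1 X1 t * surv M2 X2 t"

end

theory Submission
  imports Defs
begin

lemma surv_antimono:
  assumes "prob_space M" "X \<in> borel_measurable M" "s \<le> t"
  shows "surv M X t \<le> surv M X s"
proof -
  interpret prob_space M by fact
  have "{\<omega> \<in> space M. s \<le> X \<omega>} \<in> sets M" using assms(2) by measurable
  then show ?thesis unfolding surv_def
    by (intro finite_measure_mono) (use assms(3) in auto)
qed

lemma H_diff:
  assumes "prob_space M" "X \<in> borel_measurable M" "0 \<le> u" "u \<le> v"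
  shows "Hfun M X v - Hfun M X u \<ge> (v - u) * surv M X v"
proof -
  have mono: "mono_on {0..v} (\<lambda>t. - surv M X t)"
    by (auto simp: mono_on_def intro!: surv_antimono assms)
  have "(\<lambda>t. - surv M X t) integrable_on {0..v}"
    by (rule integrable_on_mono_on[OF mono])
  then have int: "surv M X integrable_on {0..v}"
    using integrable_neg by fastforce
  have split: "integral {0..v} (surv M X) = integral {0..u} (surv M X) + integral {u..v} (surv M X)"
    using Henstock_Kurzweil_Integration.integral_combine[OF assms(3,4) int] by simp
  have intuv: "surv M X integrable_on {u..v}"
    using integrable_on_subinterval[OF int] assms by auto
  have "integral {u..v} (\<lambda>t. surv M X v) \<le> integral {u..v} (surv M X)"
    by (intro integral_le intuv) (auto intro!: surv_antimono assms)
  then show ?thesis using split assms(4) unfolding Hfun_def by simp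
qed

lemma dens_pos:
  assumes "weakly_regular M X f" "f u > 0"
  obtains \<alpha> \<beta> where "\<alpha> \<le> u" "ereal u \<le> \<beta>"
    "\<And>t. \<alpha> \<le> t \<Longrightarrow> ereal t \<le> \<beta> \<Longrightarrow> f t > 0"
    "\<And>t. \<not> (\<alpha> \<le> t \<and> ereal t \<le> \<beta>) \<Longrightarrow> f t = 0"
    "\<And>s t. \<alpha> \<le> s \<Longrightarrow> ereal s \<le> \<beta> \<Longrightarrow> \<alpha> \<le> t \<Longrightarrow> ereal t \<le> \<beta> \<Longrightarrow> s \<le> t
        \<Longrightarrow> s - surv M X s / f s \<le> t - surv M X t / f t"
proof -
  from assms(1) obtain \<alpha> \<beta> where ab: "0 \<le> \<alpha>" "ereal \<alpha> < \<beta>"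
    "\<forall>t\<in>{t. \<alpha> \<le> t \<and> ereal t \<le> \<beta>}. f t > 0"
    "\<forall>t. t \<notin> {t. \<alpha> \<le> t \<and> ereal t \<le> \<beta>} \<longrightarrow> f t = 0"
    "mono_on {t. \<alpha> \<le> t \<and> ereal t \<le> \<beta>} (\<lambda>t. t - surv M X t / f t)"
    unfolding weakly_regular_def Let_def by blast
  have "\<alpha> \<le> u \<and> ereal u \<le> \<beta>" using ab(4) assms(2) by force
  then show ?thesis
    using that[of \<alpha> \<beta>] ab by (auto simp: mono_on_def)
qed

lemma surv_zero:
  assumes "weakly_regular M X f" "\<And>x. x \<ge> v \<Longrightarrow> f x = 0"
  shows "surv M X v = 0"
proof -
  have D: "distributed M lborel X (\<lambda>x. ennreal (f x))" using assms(1) unfolding weakly_regular_def by blast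
  have "emeasure M (X -` {v..} \<inter> space M) = (\<integral>\<^sup>+x. ennreal (f x) * indicator {v..} x \<partial>lborel)"
    using distributed_emeasure[OF D] by simp
  also have "(\<lambda>x. ennreal (f x) * indicator {v..} x) = (\<lambda>x. 0)"
    using assms(2) by (auto simp: indicator_def fun_eq_iff)
  also have "(\<integral>\<^sup>+x. 0 \<partial>lborel) = 0" by simp
  finally have "emeasure M (X -` {v..} \<inter> space M) = 0" .
  moreover have "X -` {v..} \<inter> space M = {\<omega> \<in> space M. X \<omega> \<ge> v}" by auto
  ultimately show ?thesis unfolding surv_def by (simp add: measure_def)
qed

lemma main:
  assumes A: "weakly_regular Ma Xa fa" and B: "weakly_regular Mb Xb fb"
    and u: "0 \<le> u" and pos: "fb u * (Hfun Ma Xa u - r) - surv Ma Xa u * surv Mb Xb u > 0"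
    and v: "u < v"
  shows "fb v * (Hfun Ma Xa v - r) - surv Ma Xa v * surv Mb Xb v \<ge> 0"
proof -
  have pa: "prob_space Ma" and ma: "Xa \<in> borel_measurable Ma"
    using A unfolding weakly_regular_def by (auto dest: distributed_measurable)
  have pb: "prob_space Mb" using B unfolding weakly_regular_def by auto
  have Ga: "surv Ma Xa v \<ge> 0" "surv Mb Xb u \<ge> 0" "surv Mb Xb v \<ge> 0" unfolding surv_def by auto
  have fbnn: "fb u \<ge> 0"
  proof -
    obtain al be where "\<forall>t\<in>{t. al \<le> t \<and> ereal t \<le> be}. fb t > 0"
        "\<forall>t. t \<notin> {t. al \<le> t \<and> ereal t \<le> be} \<longrightarrow> fb t = 0"
      using B unfolding weakly_regular_def Let_def by blast
    then show ?thesis by (cases "u \<in> {t. al \<le> t \<and> ereal t \<le> be}") auto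
  qed
  have GG: "surv Ma Xa u * surv Mb Xb u \<ge> 0" unfolding surv_def by auto
  have "fb u \<noteq> 0" using pos GG by auto
  then have fbu: "fb u > 0" using fbnn by linarith
  obtain \<alpha> \<beta> where ab: "\<alpha> \<le> u" "ereal u \<le> \<beta>"
    "\<And>t. \<alpha> \<le> t \<Longrightarrow> ereal t \<le> \<beta> \<Longrightarrow> fb t > 0"
    "\<And>t. \<not> (\<alpha> \<le> t \<and> ereal t \<le> \<beta>) \<Longrightarrow> fb t = 0"
    "\<And>s t. \<alpha> \<le> s \<Longrightarrow> ereal s \<le> \<beta> \<Longrightarrow> \<alpha> \<le> t \<Longrightarrow> ereal t \<le> \<beta> \<Longrightarrow> s \<le> t
        \<Longrightarrow> s - surv Mb Xb s / fb s \<le> t - surv Mb Xb t / fb t"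
    by (rule dens_pos[OF B fbu]) blast
  show ?thesis
  proof (cases "ereal v \<le> \<beta>")
    case False
    have "\<And>x. x \<ge> v \<Longrightarrow> fb x = 0"
    proof -
      fix x assume "x \<ge> v"
      then have "\<not> ereal x \<le> \<beta>" using False by (meson ereal_less_eq(3) order_trans)
      then show "fb x = 0" using ab(4) by blast
    qed
    then have "surv Mb Xb v = 0" "fb v = 0" using surv_zero[OF B] by auto
    then show ?thesis by simp
  next
    case True
    have fbv: "fb v > 0" using ab(1,3) True v by auto
    define cu where "cu = surv Mb Xb u / fb u"
    define cv where "cv = surv Mb Xb v / fb v"
    have cu0: "cu \<ge> 0" using Ga fbu unfolding cu_def by auto
    have cv: "cv \<le> cu + (v - u)" using ab(5)[of u v] ab(1,2) True v unfolding cu_def cv_def by auto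
    have G: "surv Ma Xa v \<le> surv Ma Xa u" using surv_antimono[OF pa ma] v by auto
    have H: "Hfun Ma Xa v - Hfun Ma Xa u \<ge> (v - u) * surv Ma Xa v" using H_diff[OF pa ma u] v by auto
    have gu: "Hfun Ma Xa u - surv Ma Xa u * cu > r"
    proof -
      have e1: "fb u * cu = surv Mb Xb u" using fbu unfolding cu_def by simp
      have "fb u * (Hfun Ma Xa u - surv Ma Xa u * cu - r) = fb u * (Hfun Ma Xa u - r) - surv Ma Xa u * (fb u * cu)"
        by (simp add: algebra_simps)
      then have "fb u * (Hfun Ma Xa u - surv Ma Xa u * cu - r) > 0"
        using pos e1 by simp
      then show ?thesis using fbu by (simp add: zero_less_mult_iff)
    qed
    have "surv Ma Xa v * cv \<le> surv Ma Xa v * (cu + (v - u))"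
      using cv Ga by (simp add: mult_left_mono)
    then have A: "surv Ma Xa v * cv \<le> surv Ma Xa v * cu + (v - u) * surv Ma Xa v"
      by (simp add: algebra_simps)
    moreover have "cu * surv Ma Xa v \<le> cu * surv Ma Xa u" using G cu0 by (simp add: mult_left_mono)
    ultimately have gv: "Hfun Ma Xa v - surv Ma Xa v * cv > r" using gu H A
      by (simp add: mult.commute)
    have "fb v * (Hfun Ma Xa v - surv Ma Xa v * cv - r) > 0" using gv fbv by simp
    moreover have e2: "fb v * cv = surv Mb Xb v" using fbv unfolding cv_def by simp
    moreover have "fb v * (Hfun Ma Xa v - surv Ma Xa v * cv - r) = fb v * (Hfun Ma Xa v - r) - surv Ma Xa v * (fb v * cv)"
        by (simp add: algebra_simps)
    ultimately show ?thesis by simp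
  qed
qed

theorem lemma3:
  fixes M1 :: "'a measure" and X1 :: "'a \<Rightarrow> real" and f1 :: "real \<Rightarrow> real"
    and M2 :: "'b measure" and X2 :: "'b \<Rightarrow> real" and f2 :: "real \<Rightarrow> real"
  assumes "weakly_regular M1 X1 f1" and "weakly_regular M2 X2 f2"
  shows "(\<forall>u\<ge>0. K1 M1 X1 M2 X2 f2 u > 0 \<longrightarrow> (\<forall>v>u. K1 M1 X1 M2 X2 f2 v \<ge> 0))
       \<and> (\<forall>u\<ge>0. K2 M1 X1 M2 X2 f1 u > 0 \<longrightarrow> (\<forall>v>u. K2 M1 X1 M2 X2 f1 v \<ge> 0))"
proof (intro conjI allI impI)
  fix u v :: real
  assume "0 \<le> u" "K1 M1 X1 M2 X2 f2 u > 0" "u < v"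
  then show "K1 M1 X1 M2 X2 f2 v \<ge> 0"
    using main[OF assms(1,2), of u "rev_opt M1 X1" v] unfolding K1_def by auto
next
  fix u v :: real
  assume "0 \<le> u" "K2 M1 X1 M2 X2 f1 u > 0" "u < v"
  then show "K2 M1 X1 M2 X2 f1 v \<ge> 0"
    using main[OF assms(2,1), of u "rev_opt M2 X2" v] unfolding K2_def by (auto simp: mult.commute)
qed

end
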